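(* Let $1<p<\infty$ and $0<R\le\infty$. Let $\nu$ be a radial weight function on $[0,R)$, and suppose there is some $R'$ with $0\le R'<R$ such that for each $y$ with $R'<y<R$, $\inf\{\nu(x):R'\le x<y\}>0$. Then $A^p_R(\nu(|z|))$ is a Banach space, convergence in the norm of $A^p_R(\nu(|z|))$ implies uniform convergence on compact subsets of $\mathbb{D}_R$, and the point evaluations on $A^p_R(\nu(|z|))$ are bounded uniformly on compact subsets of $\mathbb{D}_R$.
   Context: $\mathbb{D}_R=\{|z|<R\}$ ($\mathbb{D}_\infty=\mathbb{C}$), $dA$ is area measure. A radial weight function on $[0,R)$ is a nonnegative measurable function $\nu$ on $[0,R)$ such that $\nu(|z|)$ is integrable on $\mathbb{D}_R$ and $\nu$ is not $0$ almost everywhere. $A^p_R(\nu(|z|))$ is the space of analytic functions $f$ on $\mathbb{D}_R$ with $\|f\|=\left(\int_{\mathbb{D}_R}|f(z)|^p\nu(|z|)\,dA(z)\right)^{1/p}<\infty$. *)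

theory Defs
  imports "HOL-Analysis.Analysis"
begin

definition disc :: "ereal \<Rightarrow> complex set" where
  "disc R = {z. ereal (cmod z) < R}"

definition radial_weight :: "ereal \<Rightarrow> (real \<Rightarrow> real) \<Rightarrow> bool" where
  "radial_weight R \<nu> \<longleftrightarrow>
     (\<forall>x. 0 \<le> x \<and> ereal x < R \<longrightarrow> 0 \<le> \<nu> x) \<and>
     (\<lambda>x. indicator {x. 0 \<le> x \<and> ereal x < R} x * \<nu> x) \<in> borel_measurable lebesgue \<and>
     set_integrable lebesgue (disc R) (\<lambda>z. \<nu> (cmod z)) \<and>
     \<not> (AE x in lebesgue. (0 \<le> x \<and> ereal x < R) \<longrightarrow> \<nu> x = 0)"

definition Ap_integral :: "real \<Rightarrow> ereal \<Rightarrow> (real \<Rightarrow> real) \<Rightarrow> (complex \<Rightarrow> complex) \<Rightarrow> ennreal" where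
  "Ap_integral p R \<nu> f = (\<integral>\<^sup>+ z \<in> disc R. ennreal (cmod (f z) powr p * \<nu> (cmod z)) \<partial>lebesgue)"

definition Ap_space :: "real \<Rightarrow> ereal \<Rightarrow> (real \<Rightarrow> real) \<Rightarrow> (complex \<Rightarrow> complex) set" where
  "Ap_space p R \<nu> = {f. f holomorphic_on disc R \<and> Ap_integral p R \<nu> f < \<infinity>}"

definition Ap_norm :: "real \<Rightarrow> ereal \<Rightarrow> (real \<Rightarrow> real) \<Rightarrow> (complex \<Rightarrow> complex) \<Rightarrow> real" where
  "Ap_norm p R \<nu> f = enn2real (Ap_integral p R \<nu> f) powr (1 / p)"

end

theory Submission
  imports Defs "HOL-Complex_Analysis.Complex_Analysis"
begin


lemma meas_Complex_pair [measurable]: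
  "(\<lambda>(x,y). Complex x y) \<in> borel_measurable (lborel \<Otimes>\<^sub>M (lborel::real measure))"
proof -
  have "(\<lambda>(x,y). Complex x y) = (\<lambda>xy. complex_of_real (fst xy) + \<i> * complex_of_real (snd xy))"
    by (auto simp: Complex_eq)
  moreover have "(\<lambda>xy. complex_of_real (fst xy) + \<i> * complex_of_real (snd xy)) \<in> borel_measurable (lborel \<Otimes>\<^sub>M (lborel::real measure))"
    by measurable
  ultimately show ?thesis by simp
qed

lemma meas_Complex_fun [measurable]:
  assumes [measurable]: "f \<in> borel_measurable M" "g \<in> borel_measurable M"
  shows "(\<lambda>x. Complex (f x) (g x)) \<in> borel_measurable M"
proof -
  have "(\<lambda>x. Complex (f x) (g x)) = (\<lambda>x. complex_of_real (f x) + \<i> * complex_of_real (g x))"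
    by (auto simp: Complex_eq)
  moreover have "(\<lambda>x. complex_of_real (f x) + \<i> * complex_of_real (g x)) \<in> borel_measurable M"
    by measurable
  ultimately show ?thesis by simp
qed

lemma lborel_complex_prod:
  "distr (lborel \<Otimes>\<^sub>M lborel) borel (\<lambda>(x,y). Complex x y) = (lborel :: complex measure)"
proof (rule lborel_eqI[symmetric])
  fix l u :: complex
  assume le: "\<And>b. b \<in> Basis \<Longrightarrow> l \<bullet> b \<le> u \<bullet> b"
  have "Re l \<le> Re u" "Im l \<le> Im u" using le[of 1] le[of \<i>] by (auto simp: Basis_complex_def)
  have pre: "(\<lambda>(x,y). Complex x y) -` box l u = {Re l<..<Re u} \<times> {Im l<..<Im u}"
    by (auto simp: box_def Basis_complex_def space_pair_measure)
  have "emeasure (distr (lborel \<Otimes>\<^sub>M lborel) borel (\<lambda>(x,y). Complex x y)) (box l u)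
        = emeasure (lborel \<Otimes>\<^sub>M lborel) ({Re l<..<Re u} \<times> {Im l<..<Im u})"
    by (subst emeasure_distr) (auto simp: pre space_pair_measure)
  also have "\<dots> = ennreal ((Re u - Re l) * (Im u - Im l))"
    using \<open>Re l \<le> Re u\<close> \<open>Im l \<le> Im u\<close>
    by (simp add: lborel.emeasure_pair_measure_Times ennreal_mult)
  also have "\<dots> = ennreal (\<Prod>b\<in>Basis. (u - l) \<bullet> b)"
    by (simp add: Basis_complex_def)
  finally show "emeasure (distr (lborel \<Otimes>\<^sub>M lborel) borel (\<lambda>(x,y). Complex x y)) (box l u) = ennreal (\<Prod>b\<in>Basis. (u - l) \<bullet> b)" .
qed simp

lemma nn_integral_complex_snd:
  fixes g :: "complex \<Rightarrow> ennreal"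
  assumes [measurable]: "g \<in> borel_measurable borel"
  shows "(\<integral>\<^sup>+z. g z \<partial>lborel) = (\<integral>\<^sup>+y. (\<integral>\<^sup>+x. g (Complex x y) \<partial>lborel) \<partial>lborel)"
proof -
  have "(\<integral>\<^sup>+z. g z \<partial>lborel) = (\<integral>\<^sup>+z. g z \<partial>(distr (lborel \<Otimes>\<^sub>M lborel) borel (\<lambda>(x,y). Complex x y)))"
    by (simp add: lborel_complex_prod)
  also have "\<dots> = (\<integral>\<^sup>+xy. g (case xy of (x,y) \<Rightarrow> Complex x y) \<partial>(lborel \<Otimes>\<^sub>M lborel))"
    by (subst nn_integral_distr) auto
  also have "\<dots> = (\<integral>\<^sup>+y. (\<integral>\<^sup>+x. g (Complex x y) \<partial>lborel) \<partial>lborel)"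
    by (subst lborel_pair.nn_integral_snd[symmetric]) auto
  finally show ?thesis .
qed

lemma nn_integral_complex_fst:
  fixes g :: "complex \<Rightarrow> ennreal"
  assumes [measurable]: "g \<in> borel_measurable borel"
  shows "(\<integral>\<^sup>+z. g z \<partial>lborel) = (\<integral>\<^sup>+x. (\<integral>\<^sup>+y. g (Complex x y) \<partial>lborel) \<partial>lborel)"
proof -
  have "(\<integral>\<^sup>+z. g z \<partial>lborel) = (\<integral>\<^sup>+z. g z \<partial>(distr (lborel \<Otimes>\<^sub>M lborel) borel (\<lambda>(x,y). Complex x y)))"
    by (simp add: lborel_complex_prod)
  also have "\<dots> = (\<integral>\<^sup>+xy. g (case xy of (x,y) \<Rightarrow> Complex x y) \<partial>(lborel \<Otimes>\<^sub>M lborel))"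
    by (subst nn_integral_distr) auto
  also have "\<dots> = (\<integral>\<^sup>+x. (\<integral>\<^sup>+y. g (Complex x y) \<partial>lborel) \<partial>lborel)"
    by (subst lborel.nn_integral_fst[symmetric]) auto
  finally show ?thesis .
qed

lemma nn_integral_shear_x:
  fixes g :: "complex \<Rightarrow> ennreal"
  assumes [measurable]: "g \<in> borel_measurable borel"
  shows "(\<integral>\<^sup>+z. g (Complex (Re z + a * Im z) (Im z)) \<partial>lborel) = (\<integral>\<^sup>+z. g z \<partial>lborel)"
proof -
  have "(\<integral>\<^sup>+z. g (Complex (Re z + a * Im z) (Im z)) \<partial>lborel)
     = (\<integral>\<^sup>+y. (\<integral>\<^sup>+x. g (Complex (x + a * y) y) \<partial>lborel) \<partial>lborel)"
    by (subst nn_integral_complex_snd) auto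
  also have "\<dots> = (\<integral>\<^sup>+y. (\<integral>\<^sup>+x. g (Complex x y) \<partial>lborel) \<partial>lborel)"
  proof (rule nn_integral_cong)
    fix y :: real
    show "(\<integral>\<^sup>+x. g (Complex (x + a * y) y) \<partial>lborel) = (\<integral>\<^sup>+x. g (Complex x y) \<partial>lborel)"
      using nn_integral_real_affine[of "\<lambda>x. g (Complex x y)" 1 "a*y"] by (simp add: add.commute)
  qed
  also have "\<dots> = (\<integral>\<^sup>+z. g z \<partial>lborel)"
    by (subst nn_integral_complex_snd) auto
  finally show ?thesis .
qed

lemma nn_integral_shear_y:
  fixes g :: "complex \<Rightarrow> ennreal"
  assumes [measurable]: "g \<in> borel_measurable borel"
  shows "(\<integral>\<^sup>+z. g (Complex (Re z) (Im z + b * Re z)) \<partial>lborel) = (\<integral>\<^sup>+z. g z \<partial>lborel)"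
proof -
  have "(\<integral>\<^sup>+z. g (Complex (Re z) (Im z + b * Re z)) \<partial>lborel)
     = (\<integral>\<^sup>+x. (\<integral>\<^sup>+y. g (Complex x (y + b * x)) \<partial>lborel) \<partial>lborel)"
    by (subst nn_integral_complex_fst) auto
  also have "\<dots> = (\<integral>\<^sup>+x. (\<integral>\<^sup>+y. g (Complex x y) \<partial>lborel) \<partial>lborel)"
  proof (rule nn_integral_cong)
    fix x :: real
    show "(\<integral>\<^sup>+y. g (Complex x (y + b * x)) \<partial>lborel) = (\<integral>\<^sup>+y. g (Complex x y) \<partial>lborel)"
      using nn_integral_real_affine[of "\<lambda>y. g (Complex x y)" 1 "b*x"] by (simp add: add.commute)
  qed
  also have "\<dots> = (\<integral>\<^sup>+z. g z \<partial>lborel)"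
    by (subst nn_integral_complex_fst) auto
  finally show ?thesis .
qed




definition shx :: "real \<Rightarrow> complex \<Rightarrow> complex" where
  "shx t z = Complex (Re z + t * Im z) (Im z)"
definition shy :: "real \<Rightarrow> complex \<Rightarrow> complex" where
  "shy t z = Complex (Re z) (Im z + t * Re z)"

lemma shx_meas [measurable]: "shx t \<in> borel_measurable borel"
  unfolding shx_def by measurable
lemma shy_meas [measurable]: "shy t \<in> borel_measurable borel"
  unfolding shy_def by measurable

lemma rot_decomp:
  assumes "cmod a = 1" "a \<noteq> -1"
  shows "a * z = shx (- (Im a / (1 + Re a))) (shy (Im a) (shx (- (Im a / (1 + Re a))) z))"
proof -
  have n: "Re a ^ 2 + Im a ^ 2 = 1" using assms(1)
    by (metis cmod_power2 one_power2)
  have "1 + Re a \<noteq> 0"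
  proof
    assume "1 + Re a = 0"
    then have "Re a = -1" by simp
    then have "Im a = 0" using n by (simp add: power2_eq_square)
    with \<open>Re a = -1\<close> assms(2) show False by (simp add: complex_eq_iff)
  qed
  define c where "c = Re a"
  define s where "s = Im a"
  define t where "t = s / (1 + c)"
  have n': "s * s = (1 - c) * (1 + c)" using n by (simp add: c_def s_def power2_eq_square algebra_simps)
  have st: "s * t = 1 - c" unfolding t_def using n' \<open>1 + Re a \<noteq> 0\<close>
    by (simp add: c_def field_simps)
  have t2: "t * (1 + c) = s" unfolding t_def using \<open>1 + Re a \<noteq> 0\<close> by (simp add: c_def)
  have e1: "Re z - t * Im z - t * (Im z + s * (Re z - t * Im z)) = c * Re z - s * Im z"
  proof -
    have "Re z - t * Im z - t * (Im z + s * (Re z - t * Im z)) = Re z * (1 - s * t) - Im z * (t * (2 - s * t))"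
      by (simp add: algebra_simps)
    also have "\<dots> = Re z * c - Im z * (t * (1 + c))" using st by simp
    finally show ?thesis using t2 by (simp add: mult.commute)
  qed
  have e2: "Im z + s * (Re z - t * Im z) = s * Re z + c * Im z"
  proof -
    have "Im z + s * (Re z - t * Im z) = s * Re z + (1 - s*t) * Im z" by (simp add: algebra_simps)
    then show ?thesis using st by simp
  qed
  have "a * z = Complex (c * Re z - s * Im z) (s * Re z + c * Im z)"
    by (simp add: complex_eq_iff c_def s_def)
  also have "\<dots> = shx (- t) (shy s (shx (- t) z))"
    unfolding shx_def shy_def using e1 e2 by simp
  finally show ?thesis by (simp add: t_def c_def s_def)
qed

lemma nn_integral_rot:
  fixes g :: "complex \<Rightarrow> ennreal"
  assumes [measurable]: "g \<in> borel_measurable borel" and a: "cmod a = 1" "a \<noteq> -1"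
  shows "(\<integral>\<^sup>+z. g (a * z) \<partial>lborel) = (\<integral>\<^sup>+z. g z \<partial>lborel)"
proof -
  define t where "t = - (Im a / (1 + Re a))"
  define s where "s = Im a"
  have "(\<integral>\<^sup>+z. g (a * z) \<partial>lborel) = (\<integral>\<^sup>+z. (\<lambda>w. g (shx t (shy s w))) (shx t z) \<partial>lborel)"
    using rot_decomp[OF a] by (simp add: t_def s_def)
  also have "\<dots> = (\<integral>\<^sup>+w. (\<lambda>w. g (shx t w)) (shy s w) \<partial>lborel)"
    using nn_integral_shear_x[of "\<lambda>w. g (shx t (shy s w))" t] by (simp add: shx_def)
  also have "\<dots> = (\<integral>\<^sup>+w. g (shx t w) \<partial>lborel)"
    using nn_integral_shear_y[of "\<lambda>w. g (shx t w)" s] by (simp add: shy_def)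
  also have "\<dots> = (\<integral>\<^sup>+w. g w \<partial>lborel)"
    using nn_integral_shear_x[of g t] by (simp add: shx_def)
  finally show ?thesis .
qed

lemma distr_rot:
  assumes a: "cmod a = 1" "a \<noteq> -1"
  shows "distr lborel borel (\<lambda>z. a * z) = (lborel :: complex measure)"
proof (rule measure_eqI)
  show "sets (distr lborel borel (\<lambda>z. a * z)) = sets (lborel :: complex measure)" by simp
  fix A :: "complex set" assume "A \<in> sets (distr lborel borel (\<lambda>z. a * z))"
  then have [measurable]: "A \<in> sets borel" by simp
  have "emeasure (distr lborel borel (\<lambda>z. a * z)) A = (\<integral>\<^sup>+z. indicator A z \<partial>(distr lborel borel (\<lambda>z. a * z)))"
    by (subst nn_integral_indicator) auto
  also have "\<dots> = (\<integral>\<^sup>+z. indicator A (a * z) \<partial>lborel)"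
    by (subst nn_integral_distr) auto
  also have "\<dots> = (\<integral>\<^sup>+z. indicator A z \<partial>lborel)"
    by (rule nn_integral_rot[OF _ a]) measurable
  also have "\<dots> = emeasure lborel A" by simp
  finally show "emeasure (distr lborel borel (\<lambda>z. a * z)) A = emeasure lborel A" .
qed

lemma integral_cball_pow:
  assumes "n \<ge> 1"
  shows "(\<integral>z. indicator (cball 0 d) z *\<^sub>R (z ^ n) \<partial>lborel) = (0::complex)"
proof -
  define a where "a = cis (pi / (2 * real n))"
  have a1: "cmod a = 1" by (simp add: a_def)
  have p1: "0 \<le> pi / (2 * real n)" by simp
  have "2 \<le> 2 * real n" using assms by simp
  then have p2: "pi / (2 * real n) \<le> pi / 2"
    by (intro divide_left_mono) auto
  have "0 \<le> cos (pi / (2 * real n))"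
    by (rule cos_ge_zero) (use p1 p2 in linarith)+
  then have "0 \<le> Re a" unfolding a_def by simp
  then have a2: "a \<noteq> -1" by auto
  have an: "a ^ n = \<i>" unfolding a_def Complex.DeMoivre using assms
    by (simp add: cis.ctr complex_eq_iff)
  define I where "I = (\<integral>z. indicator (cball 0 d) z *\<^sub>R (z ^ n) \<partial>lborel :: complex)"
  have "I = (\<integral>z. indicator (cball 0 d) z *\<^sub>R (z ^ n) \<partial>(distr lborel borel (\<lambda>z. a * z)))"
    by (simp add: distr_rot[OF a1 a2] I_def)
  also have "\<dots> = (\<integral>z. indicator (cball 0 d) (a * z) *\<^sub>R ((a * z) ^ n) \<partial>lborel)"
    by (rule integral_distr) (auto intro!: borel_measurable_continuous_on_indicator continuous_intros borel_closed)
  also have "\<dots> = (\<integral>z. a ^ n * (indicator (cball 0 d) z *\<^sub>R (z ^ n)) \<partial>lborel)"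
    using a1 by (intro Bochner_Integration.integral_cong) (auto simp: indicator_def norm_mult power_mult_distrib)
  also have "\<dots> = a ^ n * I" unfolding I_def by (rule integral_mult_right_zero)
  finally have "I = \<i> * I" by (simp add: an)
  then show ?thesis unfolding I_def[symmetric]
    by (metis complex_i_not_one mult_cancel_right2)
qed




lemma integral_cball_const:
  "(\<integral>z. indicator (cball (0::complex) d) z *\<^sub>R (c::'b::{banach,second_countable_topology}) \<partial>lborel)
     = measure lborel (cball (0::complex) d) *\<^sub>R c"
proof -
  have "integrable lborel (indicator (cball (0::complex) d) :: complex \<Rightarrow> real)"
    using borel_integrable_compact[of "cball (0::complex) d" "\<lambda>_. 1::real"] by simp
  then show ?thesis by (simp add: Bochner_Integration.integral_indicator measure_completion)
qed

lemma mean_value_cball: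
  fixes h :: "complex \<Rightarrow> complex"
  assumes h: "h holomorphic_on ball 0 r" and d: "0 < d" "d < r"
  shows "(\<integral>z. indicator (cball 0 d) z *\<^sub>R h z \<partial>lborel) = measure lborel (cball (0::complex) d) *\<^sub>R h 0"
proof -
  define r' where "r' = (d + r) / 2"
  have r': "d < r'" "r' < r" "0 < r'" using d by (auto simp: r'_def)
  have sub: "cball 0 r' \<subseteq> ball 0 r" using r' by auto
  have hc: "continuous_on (cball 0 r') h"
    using holomorphic_on_imp_continuous_on[OF h] sub continuous_on_subset by blast
  have "bounded (h ` cball 0 r')"
    using compact_imp_bounded[OF compact_continuous_image[OF hc compact_cball]] .
  then obtain B where "\<forall>y \<in> h ` cball 0 r'. norm y \<le> B" by (auto simp: bounded_iff)
  then have B: "\<And>x. x \<in> cball 0 r' \<Longrightarrow> cmod (h x) \<le> B" by auto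
  have B0: "0 \<le> B" using B[of 0] r' by (meson norm_ge_zero order_trans centre_in_cball less_imp_le)
  define c where "c n = (deriv ^^ n) h 0 / fact n" for n
  have cb: "cmod (c n) \<le> B / r' ^ n" for n
  proof -
    have "norm ((deriv ^^ n) h 0) \<le> fact n * B / r' ^ n"
      by (rule Cauchy_inequality[where r=r'])
         (use h sub hc r' B in \<open>auto intro: holomorphic_on_subset simp: dist_norm\<close>)
    then show ?thesis by (simp add: c_def norm_divide field_simps)
  qed
  define q where "q = d / r'"
  have q: "0 < q" "q < 1" using r' d by (auto simp: q_def)
  define f where "f n z = indicator (cball 0 d) z *\<^sub>R (c n * z ^ n)" for n z
  have int: "integrable lborel (f n)" for n
    unfolding f_def by (rule borel_integrable_compact) (auto intro!: continuous_intros)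
  have nb: "norm (f n z) \<le> B * q ^ n" for n z
  proof (cases "z \<in> cball 0 d")
    case True
    then have "cmod z ^ n \<le> d ^ n" by (auto intro!: power_mono)
    have "norm (f n z) = cmod (c n) * cmod z ^ n" using True by (simp add: f_def norm_mult norm_power)
    also have "\<dots> \<le> (B / r' ^ n) * d ^ n"
      by (intro mult_mono cb \<open>cmod z ^ n \<le> d ^ n\<close>) (use B0 r' in auto)
    also have "\<dots> = B * q ^ n" by (simp add: q_def power_divide)
    finally show ?thesis .
  next
    case False
    then show ?thesis using B0 q by (simp add: f_def)
  qed
  have sg: "summable (\<lambda>n. B * q ^ n)" using q by (intro summable_mult summable_geometric) auto
  have s1: "AE z in lborel. summable (\<lambda>n. norm (f n z))"
    by (intro AE_I2 summable_comparison_test'[OF sg]) (use nb in auto)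
  define m where "m = measure lborel (cball (0::complex) d)"
  have intn: "(\<integral>z. norm (f n z) \<partial>lborel) \<le> m * (B * q ^ n)" for n
  proof -
    have "(\<integral>z. norm (f n z) \<partial>lborel) \<le> (\<integral>z. indicator (cball (0::complex) d) z *\<^sub>R (B * q ^ n) \<partial>lborel)"
    proof (rule Bochner_Integration.integral_mono)
      show "integrable lborel (\<lambda>z. norm (f n z))" using int by auto
      show "integrable lborel (\<lambda>z. indicator (cball (0::complex) d) z *\<^sub>R (B * q ^ n))"
        by (rule borel_integrable_compact) auto
      show "norm (f n z) \<le> indicator (cball 0 d) z *\<^sub>R (B * q ^ n)" for z
        using nb[of n z] by (cases "z \<in> cball 0 d") (auto simp: f_def)
    qed
    also have "\<dots> = m * (B * q ^ n)" by (simp add: integral_cball_const m_def)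
    finally show ?thesis .
  qed
  have s2: "summable (\<lambda>n. (\<integral>z. norm (f n z) \<partial>lborel))"
    by (rule summable_comparison_test'[where g="\<lambda>n. m * (B * q ^ n)"])
       (use sg intn in \<open>auto intro: summable_mult\<close>)
  have sumf: "(\<Sum>n. f n z) = indicator (cball 0 d) z *\<^sub>R h z" for z
  proof (cases "z \<in> cball 0 d")
    case True
    then have "z \<in> ball 0 r" using d by auto
    from holomorphic_power_series[OF h this] have "(\<lambda>n. c n * z ^ n) sums h z"
      by (simp add: c_def)
    then show ?thesis using True by (simp add: f_def sums_iff)
  next
    case False
    then show ?thesis by (simp add: f_def)
  qed
  have fi: "integral\<^sup>L lborel (f n) = (if n = 0 then m *\<^sub>R h 0 else 0)" for n
  proof (cases "n = 0")
    case True
    have "f 0 = (\<lambda>z. indicator (cball 0 d) z *\<^sub>R h 0)" by (auto simp: f_def c_def)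
    then show ?thesis using True by (simp add: integral_cball_const m_def)
  next
    case False
    have "integral\<^sup>L lborel (f n) = (\<integral>z. c n * (indicator (cball 0 d) z *\<^sub>R z ^ n) \<partial>lborel)"
      by (rule arg_cong[where f="integral\<^sup>L lborel"]) (auto simp: f_def scaleR_conv_of_real)
    also have "\<dots> = c n * (\<integral>z. indicator (cball 0 d) z *\<^sub>R z ^ n \<partial>lborel)"
      by (rule integral_mult_right_zero)
    also have "\<dots> = 0" using False by (simp add: integral_cball_pow)
    finally show ?thesis using False by simp
  qed
  have "(\<integral>z. indicator (cball 0 d) z *\<^sub>R h z \<partial>lborel) = (\<integral>z. (\<Sum>n. f n z) \<partial>lborel)"
    by (simp add: sumf)
  also have "\<dots> = (\<Sum>n. integral\<^sup>L lborel (f n))"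
    by (rule integral_suminf[OF int s1 s2])
  also have "\<dots> = m *\<^sub>R h 0"
    unfolding fi using sums_single[of 0 "\<lambda>_. m *\<^sub>R h 0"] by (simp add: sums_iff)
  finally show ?thesis by (simp add: m_def)
qed




lemma young_like:
  fixes t s p :: real
  assumes "0 \<le> t" "0 < s" "1 < p"
  shows "t \<le> s + s powr (1 - p) * t powr p"
proof (cases "t \<le> s")
  case True
  then show ?thesis by (simp add: add_increasing2)
next
  case False
  then have ts: "1 \<le> t / s" using assms by simp
  have "t = t * 1" by simp
  also have "\<dots> \<le> t * (t / s) powr (p - 1)"
    by (intro mult_left_mono ge_one_powr_ge_zero ts) (use assms in auto)
  also have "\<dots> = (t * t powr (p - 1)) / s powr (p - 1)"
    by (simp add: powr_divide)
  also have "t * t powr (p - 1) = t powr p"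
    using False assms by (simp add: powr_mult_base)
  also have "t powr p / s powr (p - 1) = s powr (1 - p) * t powr p"
  proof -
    have "s powr (1 - p) = inverse (s powr (p - 1))" using powr_minus[of s "p - 1"] by simp
    then show ?thesis by (simp add: divide_inverse mult.commute)
  qed
  
  finally show ?thesis using assms by linarith
qed

lemma nn_integral_translate:
  fixes g :: "'a::euclidean_space \<Rightarrow> ennreal"
  assumes [measurable]: "g \<in> borel_measurable borel"
  shows "(\<integral>\<^sup>+z. g (w + z) \<partial>lborel) = (\<integral>\<^sup>+z. g z \<partial>lborel)"
proof -
  have "(\<integral>\<^sup>+z. g z \<partial>lborel) = (\<integral>\<^sup>+z. g z \<partial>(distr lborel borel ((+) w)))"
    by (simp add: lborel_distr_plus)
  also have "\<dots> = (\<integral>\<^sup>+z. g (w + z) \<partial>lborel)"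
    by (subst nn_integral_distr) auto
  finally show ?thesis by simp
qed

lemma measure_cball_pos: "0 < d \<Longrightarrow> 0 < measure lborel (cball (0::complex) d)"
proof -
  assume "0 < d"
  have "measure lborel (cball (0::complex) d) = measure lebesgue (cball (0::complex) d)"
    by (rule measure_completion[symmetric]) simp
  then show ?thesis using \<open>0 < d\<close> content_cball_gt_0_iff by metis
qed




lemma meas_ind_powr:
  fixes f :: "complex \<Rightarrow> complex"
  assumes "S \<in> sets borel" "continuous_on S f" "0 < p"
  shows "(\<lambda>z. indicator S z * cmod (f z) powr p) \<in> borel_measurable borel"
proof -
  have "continuous_on S (\<lambda>z. cmod (f z) powr p)"
    by (rule continuous_on_powr') (use assms in \<open>auto intro!: continuous_intros\<close>)
  from borel_measurable_continuous_on_indicator[OF assms(1) this] show ?thesis by simp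
qed

lemma local_bound:
  fixes h :: "complex \<Rightarrow> complex" and p d r J :: real
  assumes h: "h holomorphic_on ball w r" and d: "0 < d" "d < r" and p: "1 < p" and J0: "0 \<le> J"
    and J: "(\<integral>\<^sup>+z. ennreal (indicator (cball w d) z * cmod (h z) powr p) \<partial>lborel) \<le> ennreal J"
  shows "cmod (h w) \<le> (1 + 1 / measure lborel (cball (0::complex) d)) * J powr (1/p)"
proof -
  define m where "m = measure lborel (cball (0::complex) d)"
  have m: "0 < m" using measure_cball_pos d by (simp add: m_def)
  define h' where "h' \<zeta> = h (w + \<zeta>)" for \<zeta>
  have h': "h' holomorphic_on ball 0 r"
  proof -
    have "(h \<circ> (\<lambda>\<zeta>. w + \<zeta>)) holomorphic_on ball 0 r"
      by (rule holomorphic_on_compose_gen[OF _ h]) (auto intro!: holomorphic_intros simp: dist_norm)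
    then show ?thesis unfolding h'_def[abs_def] by (simp add: o_def)
  qed
  have mv: "(\<integral>\<zeta>. indicator (cball 0 d) \<zeta> *\<^sub>R h' \<zeta> \<partial>lborel) = m *\<^sub>R h w"
    using mean_value_cball[OF h' d] by (simp add: m_def h'_def)
  have cont: "continuous_on (cball 0 d) h'"
    by (rule continuous_on_subset[OF holomorphic_on_imp_continuous_on[OF h']]) (use d in auto)
  have int: "integrable lborel (\<lambda>\<zeta>. indicator (cball 0 d) \<zeta> *\<^sub>R h' \<zeta>)"
    by (rule borel_integrable_compact[OF compact_cball cont])
  have contw: "continuous_on (cball w d) h"
    by (rule continuous_on_subset[OF holomorphic_on_imp_continuous_on[OF h]]) (use d in \<open>auto simp: dist_norm\<close>)
  have meas0[measurable]: "(\<lambda>\<zeta>. indicator (cball 0 d) \<zeta> * cmod (h' \<zeta>) powr p) \<in> borel_measurable borel"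
    by (rule meas_ind_powr[OF _ cont]) (use p in auto)
  have measw[measurable]: "(\<lambda>z. indicator (cball w d) z * cmod (h z) powr p) \<in> borel_measurable borel"
    by (rule meas_ind_powr[OF _ contw]) (use p in auto)
  have tr: "(\<integral>\<^sup>+\<zeta>. ennreal (indicator (cball 0 d) \<zeta> * cmod (h' \<zeta>) powr p) \<partial>lborel)
        = (\<integral>\<^sup>+z. ennreal (indicator (cball w d) z * cmod (h z) powr p) \<partial>lborel)"
  proof -
    have "(\<integral>\<^sup>+\<zeta>. ennreal (indicator (cball 0 d) \<zeta> * cmod (h' \<zeta>) powr p) \<partial>lborel)
        = (\<integral>\<^sup>+\<zeta>. (\<lambda>z. ennreal (indicator (cball w d) z * cmod (h z) powr p)) (w + \<zeta>) \<partial>lborel)"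
      by (intro nn_integral_cong) (auto simp: h'_def indicator_def dist_norm)
    also have "\<dots> = (\<integral>\<^sup>+z. ennreal (indicator (cball w d) z * cmod (h z) powr p) \<partial>lborel)"
      by (rule nn_integral_translate) measurable
    finally show ?thesis .
  qed
  have key: "m * cmod (h w) \<le> s * m + s powr (1 - p) * J" if s: "0 < s" for s
  proof -
    have "ennreal (m * cmod (h w)) = ennreal (norm (\<integral>\<zeta>. indicator (cball 0 d) \<zeta> *\<^sub>R h' \<zeta> \<partial>lborel))"
      using m by (simp add: mv)
    also have "\<dots> \<le> (\<integral>\<^sup>+\<zeta>. norm (indicator (cball 0 d) \<zeta> *\<^sub>R h' \<zeta>) \<partial>lborel)"
      by (rule integral_norm_bound_ennreal[OF int])
    also have "\<dots> \<le> (\<integral>\<^sup>+\<zeta>. (ennreal s * indicator (cball 0 d) \<zeta> +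
                 ennreal (s powr (1 - p)) * ennreal (indicator (cball 0 d) \<zeta> * cmod (h' \<zeta>) powr p)) \<partial>lborel)"
    proof (rule nn_integral_mono)
      fix \<zeta> :: complex
      show "ennreal (norm (indicator (cball 0 d) \<zeta> *\<^sub>R h' \<zeta>)) \<le> ennreal s * indicator (cball 0 d) \<zeta> +
                 ennreal (s powr (1 - p)) * ennreal (indicator (cball 0 d) \<zeta> * cmod (h' \<zeta>) powr p)"
      proof (cases "\<zeta> \<in> cball 0 d")
        case True
        have "cmod (h' \<zeta>) \<le> s + s powr (1 - p) * cmod (h' \<zeta>) powr p"
          by (rule young_like) (use s p in auto)
        then have "ennreal (cmod (h' \<zeta>)) \<le> ennreal (s + s powr (1 - p) * cmod (h' \<zeta>) powr p)"
          by (rule ennreal_leI)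
        also have "\<dots> = ennreal s + ennreal (s powr (1 - p)) * ennreal (cmod (h' \<zeta>) powr p)"
          using s by (simp add: ennreal_plus ennreal_mult)
        finally show ?thesis using True by simp
      next
        case False
        then show ?thesis by simp
      qed
    qed
    also have "\<dots> = ennreal s * emeasure lborel (cball (0::complex) d) +
        ennreal (s powr (1 - p)) * (\<integral>\<^sup>+\<zeta>. ennreal (indicator (cball 0 d) \<zeta> * cmod (h' \<zeta>) powr p) \<partial>lborel)"
    proof -
      have [measurable]: "cball (0::complex) d \<in> sets borel" by (simp add: borel_closed)
      show ?thesis
        by (subst nn_integral_add) (auto simp: nn_integral_cmult nn_integral_cmult_indicator)
    qed
    also have "\<dots> \<le> ennreal s * ennreal m + ennreal (s powr (1 - p)) * ennreal J"
    proof -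
      have em: "emeasure lborel (cball (0::complex) d) = ennreal m"
        unfolding m_def by (rule emeasure_eq_ennreal_measure) (use emeasure_lborel_cball_finite[of "0::complex" d] in auto)
      show ?thesis unfolding tr em using J by (intro add_mono mult_left_mono) auto
    qed
    also have "\<dots> = ennreal (s * m + s powr (1 - p) * J)"
      using s m J0 by (simp add: ennreal_plus ennreal_mult)
    finally show ?thesis
      using s m J0 by (subst (asm) ennreal_le_iff) auto
  qed
  have "cmod (h w) \<le> (1 + 1 / m) * J powr (1/p)"
  proof (cases "J = 0")
    case True
    have "cmod (h w) \<le> 0 + e" if "0 < e" for e
    proof -
      have "m * cmod (h w) \<le> m * e" using key[OF that] True by (simp add: mult.commute)
      then show ?thesis using m by simp
    qed
    then have "cmod (h w) \<le> 0" by (rule field_le_epsilon)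
    then show ?thesis using True by simp
  next
    case False
    then have J1: "0 < J" using J0 by simp
    define s where "s = J powr (1/p)"
    have s: "0 < s" using J1 by (simp add: s_def)
    have "s powr (1 - p) * J = J powr ((1 - p) / p) * J powr 1"
      using J1 by (simp add: s_def powr_powr)
    also have "\<dots> = J powr ((1 - p) / p + 1)"
      by (simp only: powr_add)
    also have "(1 - p) / p + 1 = 1 / p" using p by (simp add: field_simps)
    finally have e: "s powr (1 - p) * J = s" by (simp add: s_def)
    have "m * cmod (h w) \<le> m * ((1 + 1/m) * s)"
    proof -
      have "m * cmod (h w) \<le> s * m + s" using key[OF s] e by simp
      moreover have "m * ((1 + 1/m) * s) = s * m + s" using m by (simp add: field_simps)
      ultimately show ?thesis by linarith
    qed
    then show ?thesis using m by (simp add: s_def)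
  qed
  then show ?thesis by (simp add: m_def)
qed




lemma powr_cancel_aux:
  fixes A p :: real assumes "0 < A"
  shows "A powr (p - 1) * A powr (1 - p) = 1"
  using assms by (simp add: powr_add[symmetric])

lemma mink_pt:
  fixes x y A B p :: real
  assumes x: "0 \<le> x" and y: "0 \<le> y" and A: "0 < A" and B: "0 < B" and p: "1 < p"
  shows "(x + y) powr p \<le> (A + B) powr (p - 1) * (A powr (1 - p) * x powr p + B powr (1 - p) * y powr p)"
proof -
  define S where "S = A + B"
  have S: "0 < S" "A \<le> S" "B \<le> S" using A B by (auto simp: S_def)
  have mono: "C powr (p - 1) \<le> S powr (p - 1)" if "0 < C" "C \<le> S" for C
    using that p by (intro powr_mono2) auto
  consider "x = 0" | "y = 0" | "0 < x" "0 < y" using x y by linarith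
  then show ?thesis
  proof cases
    case 1
    have "(x + y) powr p = (B powr (p - 1) * B powr (1 - p)) * y powr p"
      using 1 B by (simp add: powr_cancel_aux)
    also have "\<dots> \<le> (S powr (p - 1) * B powr (1 - p)) * y powr p"
      by (intro mult_right_mono mono) (use B S in auto)
    also have "\<dots> \<le> S powr (p - 1) * (A powr (1 - p) * x powr p + B powr (1 - p) * y powr p)"
      using 1 by (simp add: mult.assoc)
    finally show ?thesis by (simp add: S_def)
  next
    case 2
    have "(x + y) powr p = (A powr (p - 1) * A powr (1 - p)) * x powr p"
      using 2 A by (simp add: powr_cancel_aux)
    also have "\<dots> \<le> (S powr (p - 1) * A powr (1 - p)) * x powr p"
      by (intro mult_right_mono mono) (use A S in auto)
    also have "\<dots> \<le> S powr (p - 1) * (A powr (1 - p) * x powr p + B powr (1 - p) * y powr p)"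
      using 2 by (simp add: mult.assoc)
    finally show ?thesis by (simp add: S_def)
  next
    case 3
    define t where "t = B / S"
    have t: "0 \<le> t" "t \<le> 1" using B S by (auto simp: t_def)
    have t1: "1 - t = A / S" using S by (simp add: t_def S_def field_simps)
    have cv: "((1 - t) *\<^sub>R (x / A) + t *\<^sub>R (y / B)) powr p \<le> (1 - t) * (x / A) powr p + t * (y / B) powr p"
      by (rule convex_onD[OF powr_convex]) (use p t 3 A B in auto)
    have lhs: "(1 - t) *\<^sub>R (x / A) + t *\<^sub>R (y / B) = (x + y) / S"
      using A B S unfolding t1 by (simp add: t_def field_simps)
    have cv': "((x + y) / S) powr p \<le> (A / S) * (x / A) powr p + (B / S) * (y / B) powr p"
      using cv unfolding lhs unfolding t1 by (simp add: t_def)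
    have "(x + y) powr p = S powr p * ((x + y) / S) powr p"
      using S 3 by (simp add: powr_divide)
    also have "\<dots> \<le> S powr p * ((A / S) * (x / A) powr p + (B / S) * (y / B) powr p)"
      using cv' by (intro mult_left_mono) auto
    also have "\<dots> = (S powr p / S) * ((A / A powr p) * x powr p + (B / B powr p) * y powr p)"
      using A B S 3 by (simp add: powr_divide field_simps)
    also have "S powr p / S = S powr (p - 1)" using S by (simp add: powr_diff)
    also have "A / A powr p = A powr (1 - p)" using A by (simp add: powr_diff)
    also have "B / B powr p = B powr (1 - p)" using B by (simp add: powr_diff)
    finally show ?thesis by (simp add: S_def)
  qed
qed




definition Qi :: "'a measure \<Rightarrow> ('a \<Rightarrow> real) \<Rightarrow> real \<Rightarrow> ('a \<Rightarrow> complex) \<Rightarrow> ennreal" where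
  "Qi M W p f = (\<integral>\<^sup>+z. ennreal (cmod (f z) powr p * W z) \<partial>M)"

definition Ni :: "'a measure \<Rightarrow> ('a \<Rightarrow> real) \<Rightarrow> real \<Rightarrow> ('a \<Rightarrow> complex) \<Rightarrow> real" where
  "Ni M W p f = enn2real (Qi M W p f) powr (1 / p)"

lemma Qi_eq_Ni:
  assumes "Qi M W p f < \<infinity>" "0 < p"
  shows "Qi M W p f = ennreal (Ni M W p f powr p)"
proof -
  have "Ni M W p f powr p = enn2real (Qi M W p f)"
    using assms by (simp add: Ni_def powr_powr)
  then show ?thesis using assms by (simp add: less_top)
qed

lemma Ni_nonneg: "0 \<le> Ni M W p f" by (simp add: Ni_def)

lemma Qi_scale:
  assumes "0 < p" and W: "\<And>z. 0 \<le> W z"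
    and mf: "(\<lambda>z. ennreal (cmod (f z) powr p * W z)) \<in> borel_measurable M"
  shows "Qi M W p (\<lambda>z. c * f z) = ennreal (cmod c powr p) * Qi M W p f"
proof -
  have "Qi M W p (\<lambda>z. c * f z) = (\<integral>\<^sup>+z. ennreal (cmod c powr p) * ennreal (cmod (f z) powr p * W z) \<partial>M)"
    unfolding Qi_def using W
    by (intro nn_integral_cong) (simp add: norm_mult powr_mult ennreal_mult mult.assoc)
  also have "\<dots> = ennreal (cmod c powr p) * Qi M W p f"
    unfolding Qi_def by (rule nn_integral_cmult[OF mf])
  finally show ?thesis .
qed

lemma Ni_scale:
  assumes "0 < p" and W: "\<And>z. 0 \<le> W z"
    and mf: "(\<lambda>z. ennreal (cmod (f z) powr p * W z)) \<in> borel_measurable M"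
  shows "Ni M W p (\<lambda>z. c * f z) = cmod c * Ni M W p f"
proof -
  have "enn2real (Qi M W p (\<lambda>z. c * f z)) = cmod c powr p * enn2real (Qi M W p f)"
    using Qi_scale[OF assms(1) W mf] by (simp add: enn2real_mult)
  then show ?thesis
    unfolding Ni_def using assms by (simp add: powr_mult powr_powr)
qed

lemma Qi_finite_scale:
  assumes "0 < p" and W: "\<And>z. 0 \<le> W z"
    and mf: "(\<lambda>z. ennreal (cmod (f z) powr p * W z)) \<in> borel_measurable M"
    and fin: "Qi M W p f < \<infinity>"
  shows "Qi M W p (\<lambda>z. c * f z) < \<infinity>"
  using Qi_scale[OF assms(1) W mf] fin by (simp add: ennreal_mult_less_top)

lemma minkowski_Qi:
  assumes p: "1 < p" and W: "\<And>z. 0 \<le> W z"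
    and mf: "(\<lambda>z. ennreal (cmod (f z) powr p * W z)) \<in> borel_measurable M"
    and mg: "(\<lambda>z. ennreal (cmod (g z) powr p * W z)) \<in> borel_measurable M"
    and ff: "Qi M W p f < \<infinity>" and fg: "Qi M W p g < \<infinity>"
  shows "Qi M W p (\<lambda>z. f z + g z) < \<infinity>"
    and "Ni M W p (\<lambda>z. f z + g z) \<le> Ni M W p f + Ni M W p g"
proof -
  define a where "a = Ni M W p f"
  define b where "b = Ni M W p g"
  have a0: "0 \<le> a" and b0: "0 \<le> b" by (simp_all add: a_def b_def Ni_nonneg)
  have Qa: "Qi M W p f = ennreal (a powr p)" using Qi_eq_Ni[OF ff] p by (simp add: a_def)
  have Qb: "Qi M W p g = ennreal (b powr p)" using Qi_eq_Ni[OF fg] p by (simp add: b_def)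
  have main: "Qi M W p (\<lambda>z. f z + g z) \<le> ennreal ((a + b + 2 * e) powr p)" if e: "0 < e" for e
  proof -
    define A where "A = a + e"
    define B where "B = b + e"
    have A: "0 < A" and B: "0 < B" using a0 b0 e by (auto simp: A_def B_def)
    have aA: "a \<le> A" and bB: "b \<le> B" using e by (auto simp: A_def B_def)
    define S where "S = A + B"
    have "Qi M W p (\<lambda>z. f z + g z) \<le> (\<integral>\<^sup>+z. ennreal (S powr (p - 1)) *
        (ennreal (A powr (1 - p)) * ennreal (cmod (f z) powr p * W z) +
         ennreal (B powr (1 - p)) * ennreal (cmod (g z) powr p * W z)) \<partial>M)"
      unfolding Qi_def
    proof (rule nn_integral_mono)
      fix z
      have "cmod (f z + g z) powr p \<le> (cmod (f z) + cmod (g z)) powr p"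
        using p by (intro powr_mono2 norm_triangle_ineq) auto
      also have "\<dots> \<le> S powr (p - 1) * (A powr (1 - p) * cmod (f z) powr p + B powr (1 - p) * cmod (g z) powr p)"
        unfolding S_def by (rule mink_pt) (use A B p in auto)
      finally have "cmod (f z + g z) powr p * W z \<le>
         S powr (p - 1) * (A powr (1 - p) * cmod (f z) powr p + B powr (1 - p) * cmod (g z) powr p) * W z"
        by (rule mult_right_mono) (use W in auto)
      then have "ennreal (cmod (f z + g z) powr p * W z) \<le>
         ennreal (S powr (p - 1) * (A powr (1 - p) * (cmod (f z) powr p * W z) + B powr (1 - p) * (cmod (g z) powr p * W z)))"
        by (intro ennreal_leI) (simp add: algebra_simps)
      also have "\<dots> = ennreal (S powr (p - 1)) *
        (ennreal (A powr (1 - p)) * ennreal (cmod (f z) powr p * W z) +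
         ennreal (B powr (1 - p)) * ennreal (cmod (g z) powr p * W z))"
        using W[of z] by (simp add: ennreal_mult ennreal_plus)
      finally show "ennreal (cmod (f z + g z) powr p * W z) \<le> \<dots>" .
    qed
    also have "\<dots> = ennreal (S powr (p - 1)) * (ennreal (A powr (1 - p)) * Qi M W p f +
         ennreal (B powr (1 - p)) * Qi M W p g)"
      unfolding Qi_def using mf mg
      by (simp add: nn_integral_cmult nn_integral_add)
    also have "\<dots> = ennreal (S powr (p - 1) * (A powr (1 - p) * a powr p + B powr (1 - p) * b powr p))"
      unfolding Qa Qb by (simp add: ennreal_mult ennreal_plus)
    also have "\<dots> \<le> ennreal (S powr (p - 1) * (A powr (1 - p) * A powr p + B powr (1 - p) * B powr p))"
      using a0 b0 aA bB p
      by (intro ennreal_leI mult_left_mono add_mono powr_mono2) auto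
    also have "A powr (1 - p) * A powr p = A" using A by (simp add: powr_add[symmetric])
    also have "B powr (1 - p) * B powr p = B" using B by (simp add: powr_add[symmetric])
    also have "S powr (p - 1) * (A + B) = S powr p"
    proof -
      have "S powr (p - 1) * (A + B) = S powr (p - 1) * S powr 1" using A B by (simp add: S_def)
      also have "\<dots> = S powr (p - 1 + 1)" by (simp only: powr_add)
      finally show ?thesis by simp
    qed
    also have "S = a + b + 2 * e" by (simp add: S_def A_def B_def)
    finally show ?thesis .
  qed
  from main[of 1] show fin: "Qi M W p (\<lambda>z. f z + g z) < \<infinity>" by (metis ennreal_less_top infinity_ennreal_def le_less_trans zero_less_one)
  show "Ni M W p (\<lambda>z. f z + g z) \<le> a + b"
  proof (rule field_le_epsilon)
    fix e :: real assume e: "0 < e"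
    have "enn2real (Qi M W p (\<lambda>z. f z + g z)) \<le> (a + b + 2 * (e/2)) powr p"
      using main[of "e/2"] e by (simp add: enn2real_leI)
    then have "Ni M W p (\<lambda>z. f z + g z) \<le> ((a + b + 2 * (e/2)) powr p) powr (1/p)"
      unfolding Ni_def using p by (intro powr_mono2) auto
    also have "\<dots> = a + b + e" using a0 b0 e p by (simp add: powr_powr)
    finally show "Ni M W p (\<lambda>z. f z + g z) \<le> a + b + e" .
  qed
qed




lemma open_disc: "open (disc R)"
proof -
  have "disc R = (\<lambda>z. ereal (cmod z)) -` {..<R}" by (auto simp: disc_def)
  moreover have "open ((\<lambda>z. ereal (cmod z)) -` {..<R})"
    by (rule open_vimage) (auto intro!: continuous_intros continuous_on_ereal)
  ultimately show ?thesis by simp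
qed

lemma borel_to_lebesgue:
  "f \<in> borel_measurable borel \<Longrightarrow> f \<in> borel_measurable (lebesgue :: 'a::euclidean_space measure)"
  by (rule measurable_completion) simp

locale Apset =
  fixes p :: real and R :: ereal and \<nu> :: "real \<Rightarrow> real"
  assumes p: "1 < p" and R: "0 < R" and w: "radial_weight R \<nu>"
    and R': "\<exists>R'. 0 \<le> R' \<and> ereal R' < R \<and>
              (\<forall>y. R' < y \<and> ereal y < R \<longrightarrow> Inf {\<nu> x | x. R' \<le> x \<and> x < y} > 0)"
begin

definition W :: "complex \<Rightarrow> real" where "W z = indicator (disc R) z * \<nu> (cmod z)"

lemma W_nonneg: "0 \<le> W z"
  using w unfolding W_def radial_weight_def disc_def by (auto simp: indicator_def)

lemma W_meas: "W \<in> borel_measurable lebesgue"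
proof -
  have "set_integrable lebesgue (disc R) (\<lambda>z. \<nu> (cmod z))" using w by (simp add: radial_weight_def)
  then have "(\<lambda>z. indicator (disc R) z *\<^sub>R \<nu> (cmod z)) \<in> borel_measurable lebesgue"
    unfolding set_integrable_def by (rule borel_measurable_integrable)
  then show ?thesis by (simp add: W_def[abs_def])
qed

lemma Ap_integral_eq: "Ap_integral p R \<nu> f = Qi lebesgue W p f"
  unfolding Ap_integral_def Qi_def W_def
  by (intro nn_integral_cong) (auto simp: indicator_def)

lemma Ap_norm_eq: "Ap_norm p R \<nu> f = Ni lebesgue W p f"
  unfolding Ap_norm_def Ni_def Ap_integral_eq ..

lemma meas_f:
  assumes "continuous_on (disc R) f"
  shows "(\<lambda>z. ennreal (cmod (f z) powr p * W z)) \<in> borel_measurable lebesgue"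
proof -
  have "(\<lambda>z. indicator (disc R) z * cmod (f z) powr p) \<in> borel_measurable borel"
    by (rule meas_ind_powr[OF _ assms]) (use p open_disc in auto)
  then have m1: "(\<lambda>z. indicator (disc R) z * cmod (f z) powr p) \<in> borel_measurable lebesgue"
    by (rule borel_to_lebesgue)
  have "(\<lambda>z. (indicator (disc R) z * cmod (f z) powr p) * W z) \<in> borel_measurable lebesgue"
    using m1 W_meas by measurable
  moreover have "(\<lambda>z. (indicator (disc R) z * cmod (f z) powr p) * W z) = (\<lambda>z. cmod (f z) powr p * W z)"
    by (auto simp: W_def indicator_def)
  ultimately show ?thesis by simp
qed

lemma disc_ereal: "ereal (cmod z) < R \<Longrightarrow> z \<in> disc R" by (simp add: disc_def)

lemma eval_bound:
  assumes K: "compact K" "K \<subseteq> disc R"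
  shows "\<exists>C\<ge>0. \<forall>z\<in>K. \<forall>f. f holomorphic_on disc R \<and> Qi lebesgue W p f < \<infinity> \<longrightarrow>
            cmod (f z) \<le> C * Ni lebesgue W p f"
proof (cases "K = {}")
  case True
  then show ?thesis by auto
next
  case False
  obtain z0 where z0: "z0 \<in> K" and z0max: "\<And>z. z \<in> K \<Longrightarrow> cmod z \<le> cmod z0"
    using continuous_attains_sup[OF K(1) False continuous_on_norm_id] by auto
  define r0 where "r0 = cmod z0"
  have r0R: "ereal r0 < R" using z0 K(2) by (auto simp: disc_def r0_def)
  obtain R0 where R0: "0 \<le> R0" "ereal R0 < R"
    and R0inf: "\<And>y. R0 < y \<Longrightarrow> ereal y < R \<Longrightarrow> Inf {\<nu> x | x. R0 \<le> x \<and> x < y} > 0"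
    using R' by blast
  define a where "a = max R0 r0"
  have aR: "ereal a < R" using r0R R0 by (simp add: a_def max_def)
  obtain b where ab: "ereal a < ereal b" and bR: "ereal b < R"
    using ereal_dense2[OF aR] by auto
  have ab': "a < b" using ab by simp
  define c where "c = Inf {\<nu> x | x. R0 \<le> x \<and> x < b}"
  have c: "0 < c" unfolding c_def using ab' bR by (intro R0inf) (auto simp: a_def)
  have nu0: "0 \<le> \<nu> x" if "0 \<le> x" "ereal x < R" for x
    using w that unfolding radial_weight_def by auto
  have cle: "c \<le> \<nu> x" if "R0 \<le> x" "x < b" for x
    unfolding c_def
  proof (rule cInf_lower)
    show "\<nu> x \<in> {\<nu> x |x. R0 \<le> x \<and> x < b}" using that by auto
    show "bdd_below {\<nu> x |x. R0 \<le> x \<and> x < b}"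
    proof (rule bdd_belowI)
      fix v assume "v \<in> {\<nu> x |x. R0 \<le> x \<and> x < b}"
      then obtain x where "v = \<nu> x" "R0 \<le> x" "x < b" by auto
      moreover have "ereal x < R" using \<open>x < b\<close> bR by (meson ereal_less_eq(3) le_less_trans less_imp_le)
      ultimately show "0 \<le> v" using nu0 R0 by auto
    qed
  qed
  define \<rho> where "\<rho> = (a + b) / 2"
  define \<delta> where "\<delta> = (b - a) / 4"
  have \<delta>: "0 < \<delta>" using ab' by (simp add: \<delta>_def)
  have a0: "0 \<le> a" using R0 by (simp add: a_def)
  have R0a: "R0 \<le> a" by (simp add: a_def)
  have \<rho>: "0 < \<rho>" using a0 ab' by (simp add: \<rho>_def)
  define m where "m = measure lborel (cball (0::complex) \<delta>)"
  define C where "C = (1 + 1/m) * (1/c) powr (1/p)"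
  have m: "0 < m" using measure_cball_pos[OF \<delta>] by (simp add: m_def)
  have C: "0 \<le> C" using m c by (simp add: C_def)
  have inb: "ereal x < R" if "x < b" for x
    using that bR by (meson ereal_less_eq(3) le_less_trans less_imp_le)
  show ?thesis
  proof (intro exI[of _ C] conjI C ballI allI impI)
    fix z f assume z: "z \<in> K" and f: "f holomorphic_on disc R \<and> Qi lebesgue W p f < \<infinity>"
    then have hol: "f holomorphic_on disc R" and fin: "Qi lebesgue W p f < \<infinity>" by auto
    have contf: "continuous_on (disc R) f" by (rule holomorphic_on_imp_continuous_on[OF hol])
    define N where "N = Ni lebesgue W p f"
    have N0: "0 \<le> N" by (simp add: N_def Ni_nonneg)
    have QN: "Qi lebesgue W p f = ennreal (N powr p)" using Qi_eq_Ni[OF fin] p by (simp add: N_def)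
    define J where "J = N powr p / c"
    have J0: "0 \<le> J" using c by (simp add: J_def)
    have circ: "cmod (f w) \<le> C * N" if w: "cmod w = \<rho>" for w
    proof -
      have ballsub: "ball w (2 * \<delta>) \<subseteq> disc R"
      proof
        fix \<zeta> assume "\<zeta> \<in> ball w (2 * \<delta>)"
        then have "cmod \<zeta> < b" using w norm_triangle_ineq2[of \<zeta> w]
          by (auto simp: dist_norm \<rho>_def \<delta>_def norm_minus_commute)
        then show "\<zeta> \<in> disc R" using inb by (simp add: disc_def)
      qed
      have hb: "f holomorphic_on ball w (2 * \<delta>)" using hol ballsub by (rule holomorphic_on_subset)
      have Jb: "(\<integral>\<^sup>+\<zeta>. ennreal (indicator (cball w \<delta>) \<zeta> * cmod (f \<zeta>) powr p) \<partial>lborel) \<le> ennreal J"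
      proof -
        have "(\<integral>\<^sup>+\<zeta>. ennreal (indicator (cball w \<delta>) \<zeta> * cmod (f \<zeta>) powr p) \<partial>lborel)
            = (\<integral>\<^sup>+\<zeta>. ennreal (indicator (cball w \<delta>) \<zeta> * cmod (f \<zeta>) powr p) \<partial>lebesgue)"
          by (rule nn_integral_completion[symmetric])
        also have "\<dots> \<le> (\<integral>\<^sup>+\<zeta>. ennreal (1/c) * ennreal (cmod (f \<zeta>) powr p * W \<zeta>) \<partial>lebesgue)"
        proof (rule nn_integral_mono)
          fix \<zeta> :: complex
          show "ennreal (indicator (cball w \<delta>) \<zeta> * cmod (f \<zeta>) powr p) \<le> ennreal (1/c) * ennreal (cmod (f \<zeta>) powr p * W \<zeta>)"
          proof (cases "\<zeta> \<in> cball w \<delta>")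
            case True
            then have d1: "cmod \<zeta> \<le> \<rho> + \<delta>" "\<rho> - \<delta> \<le> cmod \<zeta>"
              using w norm_triangle_ineq2[of \<zeta> w] norm_triangle_ineq2[of w \<zeta>]
              by (auto simp: dist_norm norm_minus_commute)
            then have lo: "R0 \<le> cmod \<zeta>" and hi: "cmod \<zeta> < b"
              using ab' R0a unfolding \<rho>_def \<delta>_def by (auto simp: field_simps)
            have Wz: "W \<zeta> = \<nu> (cmod \<zeta>)" using inb[OF hi] by (simp add: W_def disc_def)
            have "1 \<le> W \<zeta> / c" using cle[OF lo hi] c by (simp add: Wz)
            then have "cmod (f \<zeta>) powr p \<le> cmod (f \<zeta>) powr p * (W \<zeta> / c)"
              by (intro mult_le_cancel_left1[THEN iffD2]) auto
            then have "cmod (f \<zeta>) powr p \<le> 1/c * (cmod (f \<zeta>) powr p * W \<zeta>)" by simp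
            then show ?thesis using True c W_nonneg[of \<zeta>]
              by (simp add: ennreal_mult[symmetric] ennreal_leI)
          qed simp
        qed
        also have "\<dots> = ennreal (1/c) * Qi lebesgue W p f"
          unfolding Qi_def by (rule nn_integral_cmult[OF meas_f[OF contf]])
        also have "\<dots> = ennreal J" using c by (simp add: QN J_def ennreal_mult[symmetric])
        finally show ?thesis .
      qed
      have "cmod (f w) \<le> (1 + 1 / m) * J powr (1/p)"
        using local_bound[OF hb _ _ p J0 Jb] \<delta> by (simp add: m_def)
      also have "J powr (1/p) = N * (1/c) powr (1/p)"
        using N0 c p by (simp add: J_def powr_divide powr_powr)
      finally show ?thesis by (simp add: C_def mult.commute mult.left_commute)
    qed
    have "r0 \<le> a" by (simp add: a_def)
    then have zr: "cmod z \<le> \<rho>" using z0max[OF z] ab' unfolding r0_def[symmetric] \<rho>_def by (auto simp: field_simps)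
    have csub: "cball 0 \<rho> \<subseteq> disc R"
    proof
      fix \<zeta> :: complex assume "\<zeta> \<in> cball 0 \<rho>"
      then have "cmod \<zeta> < b" using ab' by (simp add: \<rho>_def)
      then show "\<zeta> \<in> disc R" using inb by (simp add: disc_def)
    qed
    show "cmod (f z) \<le> C * N"
    proof (rule maximum_modulus_frontier[where S="cball (0::complex) \<rho>" and f=f and \<xi>=z])
      show "f holomorphic_on interior (cball 0 \<rho>)"
        using hol csub by (metis interior_cball ball_subset_cball holomorphic_on_subset order_trans)
      show "continuous_on (closure (cball 0 \<rho>)) f" using contf csub by (auto intro: continuous_on_subset)
      show "bounded (cball (0::complex) \<rho>)" by simp
      show "cmod (f w) \<le> C * N" if "w \<in> frontier (cball 0 \<rho>)" for w
        using that \<rho> circ by (simp add: frontier_cball)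
      show "z \<in> cball 0 \<rho>" using zr by simp
    qed
  qed
qed

end




context Apset begin

lemma mem_A: "f \<in> Ap_space p R \<nu> \<longleftrightarrow> f holomorphic_on disc R \<and> Qi lebesgue W p f < \<infinity>"
  by (simp add: Ap_space_def Ap_integral_eq)

lemma A_meas: "f \<in> Ap_space p R \<nu> \<Longrightarrow> (\<lambda>z. ennreal (cmod (f z) powr p * W z)) \<in> borel_measurable lebesgue"
  by (rule meas_f) (simp add: mem_A holomorphic_on_imp_continuous_on)

lemma A_zero: "(\<lambda>z. 0) \<in> Ap_space p R \<nu>"
  by (simp add: mem_A Qi_def)

lemma A_add: "f \<in> Ap_space p R \<nu> \<Longrightarrow> g \<in> Ap_space p R \<nu> \<Longrightarrow> (\<lambda>z. f z + g z) \<in> Ap_space p R \<nu>"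
  using minkowski_Qi(1)[OF p W_nonneg A_meas A_meas] by (auto simp: mem_A intro: holomorphic_intros)

lemma A_scale: "f \<in> Ap_space p R \<nu> \<Longrightarrow> (\<lambda>z. c * f z) \<in> Ap_space p R \<nu>"
  using Qi_finite_scale[OF _ W_nonneg A_meas] p by (auto simp: mem_A intro: holomorphic_intros)

lemma A_diff: "f \<in> Ap_space p R \<nu> \<Longrightarrow> g \<in> Ap_space p R \<nu> \<Longrightarrow> (\<lambda>z. f z - g z) \<in> Ap_space p R \<nu>"
  using A_add[of f "\<lambda>z. (-1) * g z"] A_scale[of g "-1"] by simp

lemma N_tri: "f \<in> Ap_space p R \<nu> \<Longrightarrow> g \<in> Ap_space p R \<nu> \<Longrightarrow>
   Ap_norm p R \<nu> (\<lambda>z. f z + g z) \<le> Ap_norm p R \<nu> f + Ap_norm p R \<nu> g"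
  unfolding Ap_norm_eq using minkowski_Qi(2)[OF p W_nonneg A_meas A_meas] by (auto simp: mem_A)

lemma N_hom: "f \<in> Ap_space p R \<nu> \<Longrightarrow> Ap_norm p R \<nu> (\<lambda>z. c * f z) = cmod c * Ap_norm p R \<nu> f"
  unfolding Ap_norm_eq using Ni_scale[OF _ W_nonneg A_meas] p by auto

lemma eval_bound_A:
  assumes "compact K" "K \<subseteq> disc R"
  shows "\<exists>C\<ge>0. \<forall>z\<in>K. \<forall>f\<in>Ap_space p R \<nu>. cmod (f z) \<le> C * Ap_norm p R \<nu> f"
  using eval_bound[OF assms] by (auto simp: mem_A Ap_norm_eq)

lemma N_zero: "f \<in> Ap_space p R \<nu> \<Longrightarrow> 0 \<le> Ap_norm p R \<nu> f \<and> (Ap_norm p R \<nu> f = 0 \<longleftrightarrow> (\<forall>z\<in>disc R. f z = 0))"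
proof -
  assume f: "f \<in> Ap_space p R \<nu>"
  have "Ap_norm p R \<nu> f = 0 \<longleftrightarrow> (\<forall>z\<in>disc R. f z = 0)"
  proof
    assume N0: "Ap_norm p R \<nu> f = 0"
    show "\<forall>z\<in>disc R. f z = 0"
    proof
      fix z assume "z \<in> disc R"
      then obtain C where "\<forall>z'\<in>{z}. \<forall>f\<in>Ap_space p R \<nu>. cmod (f z') \<le> C * Ap_norm p R \<nu> f"
        using eval_bound_A[of "{z}"] by auto
      then show "f z = 0" using f N0 by auto
    qed
  next
    assume z: "\<forall>z\<in>disc R. f z = 0"
    have "(\<lambda>z. ennreal (cmod (f z) powr p * W z)) = (\<lambda>z. 0)"
      using z by (auto simp: W_def indicator_def fun_eq_iff)
    then have "Qi lebesgue W p f = 0" unfolding Qi_def by simp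
    then show "Ap_norm p R \<nu> f = 0" by (simp add: Ap_norm_eq Ni_def)
  qed
  then show ?thesis by (simp add: Ap_norm_eq Ni_nonneg)
qed

lemma uniform_conv:
  assumes F: "\<forall>n. F n \<in> Ap_space p R \<nu>" and f: "f \<in> Ap_space p R \<nu>"
    and lim: "(\<lambda>n. Ap_norm p R \<nu> (\<lambda>z. F n z - f z)) \<longlonglongrightarrow> 0"
    and K: "compact K" "K \<subseteq> disc R"
  shows "uniform_limit K F f sequentially"
proof -
  obtain C where C: "0 \<le> C" and Cb: "\<And>z g. z \<in> K \<Longrightarrow> g \<in> Ap_space p R \<nu> \<Longrightarrow> cmod (g z) \<le> C * Ap_norm p R \<nu> g"
    using eval_bound_A[OF K] by auto
  show ?thesis
  proof (rule uniform_limitI)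
    fix e :: real assume e: "0 < e"
    have "eventually (\<lambda>n. dist (Ap_norm p R \<nu> (\<lambda>z. F n z - f z)) 0 < e / (C + 1)) sequentially"
      using lim e C by (intro tendstoD) auto
    then show "\<forall>\<^sub>F n in sequentially. \<forall>x\<in>K. dist (F n x) (f x) < e"
    proof eventually_elim
      case (elim n)
      show ?case
      proof
        fix x assume x: "x \<in> K"
        have d: "(\<lambda>z. F n z - f z) \<in> Ap_space p R \<nu>" using A_diff F f by auto
        have nn: "0 \<le> Ap_norm p R \<nu> (\<lambda>z. F n z - f z)" using N_zero[OF d] by auto
        have "dist (F n x) (f x) \<le> C * Ap_norm p R \<nu> (\<lambda>z. F n z - f z)"
          using Cb[OF x d] by (simp add: dist_norm)
        also have "\<dots> \<le> C * (e / (C + 1))"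
          using elim nn C by (intro mult_left_mono) auto
        also have "\<dots> < e" using C e by (simp add: field_simps)
        finally show "dist (F n x) (f x) < e" .
      qed
    qed
  qed
qed

end




context Apset begin

lemma complete_A:
  assumes F: "\<forall>n. F n \<in> Ap_space p R \<nu>"
    and cau: "\<forall>e>0. \<exists>M. \<forall>m\<ge>M. \<forall>n\<ge>M. Ap_norm p R \<nu> (\<lambda>z. F m z - F n z) < e"
  shows "\<exists>g\<in>Ap_space p R \<nu>. (\<lambda>n. Ap_norm p R \<nu> (\<lambda>z. F n z - g z)) \<longlonglongrightarrow> 0"
proof -
  define D where "D = disc R"
  have oD: "open D" by (simp add: D_def open_disc)
  have Fd: "(\<lambda>z. F m z - F n z) \<in> Ap_space p R \<nu>" for m n using A_diff F by auto
  have ucau: "\<exists>M. \<forall>m\<ge>M. \<forall>n\<ge>M. \<forall>z\<in>K. cmod (F m z - F n z) \<le> e"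
    if K: "compact K" "K \<subseteq> D" and e: "0 < e" for K e
  proof -
    obtain C where C: "0 \<le> C" and Cb: "\<And>z g. z \<in> K \<Longrightarrow> g \<in> Ap_space p R \<nu> \<Longrightarrow> cmod (g z) \<le> C * Ap_norm p R \<nu> g"
      using eval_bound_A[of K] K by (auto simp: D_def)
    obtain M where M: "\<And>m n. m \<ge> M \<Longrightarrow> n \<ge> M \<Longrightarrow> Ap_norm p R \<nu> (\<lambda>z. F m z - F n z) < e / (C + 1)"
      using cau e C by (meson divide_pos_pos add_nonneg_pos zero_less_one)
    show ?thesis
    proof (intro exI allI impI ballI)
      fix m n z assume mn: "M \<le> m" "M \<le> n" and z: "z \<in> K"
      have "cmod (F m z - F n z) \<le> C * Ap_norm p R \<nu> (\<lambda>z. F m z - F n z)"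
        using Cb[OF z Fd] by simp
      also have "\<dots> \<le> C * (e / (C + 1))"
        using M[OF mn] C by (intro mult_left_mono) auto
      also have "\<dots> \<le> e" using C e by (simp add: field_simps)
      finally show "cmod (F m z - F n z) \<le> e" .
    qed
  qed
  define g where "g z = (if z \<in> D then lim (\<lambda>n. F n z) else 0)" for z
  have conv: "(\<lambda>n. F n z) \<longlonglongrightarrow> g z" if z: "z \<in> D" for z
  proof -
    have "Cauchy (\<lambda>n. F n z)"
    proof (rule CauchyI)
      fix e :: real assume e: "0 < e"
      obtain M where M: "\<forall>m\<ge>M. \<forall>n\<ge>M. \<forall>z'\<in>{z}. cmod (F m z' - F n z') \<le> e / 2"
        using ucau[of "{z}" "e/2"] z e by auto
      show "\<exists>M. \<forall>m\<ge>M. \<forall>n\<ge>M. norm (F m z - F n z) < e"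
        using M e by (intro exI[of _ M]) fastforce
    qed
    then show ?thesis using z by (simp add: g_def Cauchy_convergent_iff convergent_LIMSEQ_iff)
  qed
  have uconv: "\<exists>M. \<forall>n\<ge>M. \<forall>z\<in>K. cmod (F n z - g z) \<le> e"
    if K: "compact K" "K \<subseteq> D" and e: "0 < e" for K e
  proof -
    obtain M where M: "\<forall>m\<ge>M. \<forall>n\<ge>M. \<forall>z\<in>K. cmod (F m z - F n z) \<le> e"
      using ucau[OF K e] by auto
    show ?thesis
    proof (intro exI allI impI ballI)
      fix n z assume n: "M \<le> n" and z: "z \<in> K"
      have "(\<lambda>m. cmod (F n z - F m z)) \<longlonglongrightarrow> cmod (F n z - g z)"
        using conv[of z] z K by (intro tendsto_intros) auto
      then show "cmod (F n z - g z) \<le> e"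
        by (rule LIMSEQ_le_const2) (use M n z in auto)
    qed
  qed
  have gh: "g holomorphic_on D"
    unfolding holomorphic_on_def
  proof
    fix z assume z: "z \<in> D"
    obtain r where r: "0 < r" "cball z r \<subseteq> D"
      using oD z open_contains_cball by blast
    have ul: "uniform_limit (cball z r) F g sequentially"
    proof (rule uniform_limitI)
      fix e :: real assume e: "0 < e"
      obtain M where "\<forall>n\<ge>M. \<forall>x\<in>cball z r. cmod (F n x - g x) \<le> e / 2"
        using uconv[of "cball z r" "e/2"] r e by auto
      then show "\<forall>\<^sub>F n in sequentially. \<forall>x\<in>cball z r. dist (F n x) (g x) < e"
        unfolding eventually_sequentially using e by (fastforce simp: dist_norm)
    qed
    have ev: "\<forall>\<^sub>F n in sequentially. continuous_on (cball z r) (F n) \<and> F n holomorphic_on ball z r"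
    proof (rule always_eventually, intro allI conjI)
      fix n
      have hn: "F n holomorphic_on D" using F by (simp add: mem_A D_def)
      show "continuous_on (cball z r) (F n)"
        using holomorphic_on_imp_continuous_on[OF hn] r(2) by (rule continuous_on_subset)
      show "F n holomorphic_on ball z r"
        using hn r(2) ball_subset_cball by (meson holomorphic_on_subset order_trans)
    qed
    obtain "g holomorphic_on ball z r"
      using holomorphic_uniform_limit[OF ev ul] by auto
    then have "g field_differentiable (at z)"
      using r by (intro holomorphic_on_imp_differentiable_at[of g "ball z r"]) auto
    then show "g field_differentiable (at z within D)"
      by (rule field_differentiable_at_within)
  qed
  have contg: "continuous_on D g" by (rule holomorphic_on_imp_continuous_on[OF gh])
  have contF: "continuous_on D (F n)" for n
    using F by (auto simp: mem_A D_def intro: holomorphic_on_imp_continuous_on)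
  have fatou: "Qi lebesgue W p (\<lambda>z. F n z - g z) \<le> ennreal (e powr p)"
    if n: "\<forall>m\<ge>M. \<forall>n\<ge>M. Ap_norm p R \<nu> (\<lambda>z. F m z - F n z) < e" "M \<le> n" and e: "0 < e" for n M e
  proof -
    define u where "u m z = ennreal (cmod (F n z - F m z) powr p * W z)" for m z
    have um: "u m \<in> borel_measurable lebesgue" for m
      unfolding u_def by (rule meas_f) (auto simp: D_def[symmetric] intro!: continuous_intros contF)
    have pt: "ennreal (cmod (F n z - g z) powr p * W z) = liminf (\<lambda>m. u m z)" for z
    proof (cases "z \<in> D")
      case True
      have "(\<lambda>m. u m z) \<longlonglongrightarrow> ennreal (cmod (F n z - g z) powr p * W z)"
        unfolding u_def
        by (intro tendsto_ennrealI tendsto_mult tendsto_const tendsto_powr' tendsto_norm tendsto_diff conv True)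
           (use p in auto)
      then show ?thesis by (simp add: lim_imp_Liminf)
    next
      case False
      then have "W z = 0" by (simp add: W_def D_def)
      then show ?thesis by (simp add: u_def Liminf_const)
    qed
    have "Qi lebesgue W p (\<lambda>z. F n z - g z) = (\<integral>\<^sup>+z. liminf (\<lambda>m. u m z) \<partial>lebesgue)"
      unfolding Qi_def by (simp add: pt)
    also have "\<dots> \<le> liminf (\<lambda>m. integral\<^sup>N lebesgue (u m))"
      by (rule nn_integral_liminf[OF um])
    also have "\<dots> \<le> ennreal (e powr p)"
    proof (rule Liminf_le)
      show "sequentially \<noteq> bot" by simp
      show "\<forall>\<^sub>F m in sequentially. integral\<^sup>N lebesgue (u m) \<le> ennreal (e powr p)"
        unfolding eventually_sequentially
      proof (intro exI allI impI)
        fix m assume m: "M \<le> m"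
        have fin: "Qi lebesgue W p (\<lambda>z. F n z - F m z) < \<infinity>" using Fd[of n m] by (simp add: mem_A)
        have Nl: "Ni lebesgue W p (\<lambda>z. F n z - F m z) < e" using n m by (simp add: Ap_norm_eq)
        have "integral\<^sup>N lebesgue (u m) = Qi lebesgue W p (\<lambda>z. F n z - F m z)"
          by (simp add: u_def[abs_def] Qi_def)
        also have "\<dots> = ennreal (Ni lebesgue W p (\<lambda>z. F n z - F m z) powr p)"
          using Qi_eq_Ni[OF fin] p by simp
        also have "\<dots> \<le> ennreal (e powr p)"
          using Nl p by (intro ennreal_leI powr_mono2) (auto simp: Ni_nonneg)
        finally show "integral\<^sup>N lebesgue (u m) \<le> ennreal (e powr p)" .
      qed
    qed
    finally show ?thesis .
  qed
  obtain M1 where M1: "\<forall>m\<ge>M1. \<forall>n\<ge>M1. Ap_norm p R \<nu> (\<lambda>z. F m z - F n z) < 1"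
    using cau[rule_format, of 1] by auto
  have fin1: "Qi lebesgue W p (\<lambda>z. F M1 z - g z) < \<infinity>"
    using fatou[OF M1 order_refl] by (metis ennreal_less_top infinity_ennreal_def le_less_trans zero_less_one)
  have mgd: "(\<lambda>z. ennreal (cmod (F M1 z - g z) powr p * W z)) \<in> borel_measurable lebesgue"
    by (rule meas_f) (auto simp: D_def[symmetric] intro!: continuous_intros contF contg)
  have gA: "g \<in> Ap_space p R \<nu>"
  proof -
    have mneg: "(\<lambda>z. ennreal (cmod ((-1) * (F M1 z - g z)) powr p * W z)) \<in> borel_measurable lebesgue"
      by (rule meas_f) (auto simp: D_def[symmetric] intro!: continuous_intros contF contg)
    have f2: "Qi lebesgue W p (\<lambda>z. (-1) * (F M1 z - g z)) < \<infinity>"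
      by (rule Qi_finite_scale[OF _ W_nonneg mgd fin1]) (use p in linarith)
    have f1: "Qi lebesgue W p (F M1) < \<infinity>" using F by (simp add: mem_A)
    have "Qi lebesgue W p (\<lambda>z. F M1 z + (-1) * (F M1 z - g z)) < \<infinity>"
      by (rule minkowski_Qi(1)[OF p W_nonneg A_meas mneg f1 f2]) (use F in auto)
    then have "Qi lebesgue W p g < \<infinity>" by simp
    then show ?thesis using gh by (simp add: mem_A D_def)
  qed
  have "(\<lambda>n. Ap_norm p R \<nu> (\<lambda>z. F n z - g z)) \<longlonglongrightarrow> 0"
  proof (rule LIMSEQ_I)
    fix e :: real assume e: "0 < e"
    obtain M where M: "\<forall>m\<ge>M. \<forall>n\<ge>M. Ap_norm p R \<nu> (\<lambda>z. F m z - F n z) < e / 2"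
      using cau e by (meson half_gt_zero)
    show "\<exists>no. \<forall>n\<ge>no. norm (Ap_norm p R \<nu> (\<lambda>z. F n z - g z) - 0) < e"
    proof (intro exI allI impI)
      fix n assume n: "M \<le> n"
      have Q: "Qi lebesgue W p (\<lambda>z. F n z - g z) \<le> ennreal ((e/2) powr p)"
        using fatou[OF M n] e by simp
      have "Ap_norm p R \<nu> (\<lambda>z. F n z - g z) = enn2real (Qi lebesgue W p (\<lambda>z. F n z - g z)) powr (1/p)"
        by (simp add: Ap_norm_eq Ni_def)
      also have "\<dots> \<le> ((e/2) powr p) powr (1/p)"
        using Q p by (intro powr_mono2) (auto simp: enn2real_leI)
      also have "\<dots> = e/2" using e p by (simp add: powr_powr)
      finally have "Ap_norm p R \<nu> (\<lambda>z. F n z - g z) \<le> e / 2" .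
      moreover have "0 \<le> Ap_norm p R \<nu> (\<lambda>z. F n z - g z)" by (simp add: Ap_norm_eq Ni_nonneg)
      ultimately show "norm (Ap_norm p R \<nu> (\<lambda>z. F n z - g z) - 0) < e" using e by simp
    qed
  qed
  then show ?thesis using gA by blast
qed

end


theorem proposition5p1:
  fixes p :: real and R :: ereal and \<nu> :: "real \<Rightarrow> real"
  assumes p: "1 < p" "p < \<infinity>"
    and R: "0 < R"
    and w: "radial_weight R \<nu>"
    and R': "\<exists>R'. 0 \<le> R' \<and> ereal R' < R \<and>
              (\<forall>y. R' < y \<and> ereal y < R \<longrightarrow> Inf {\<nu> x | x. R' \<le> x \<and> x < y} > 0)"
  defines "A \<equiv> Ap_space p R \<nu>" and "N \<equiv> Ap_norm p R \<nu>"
  shows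
    \<comment> \<open>Banach space: a complex vector space of functions on the disc ...\<close>
    "(\<lambda>z. 0) \<in> A \<and>
     (\<forall>f\<in>A. \<forall>g\<in>A. (\<lambda>z. f z + g z) \<in> A) \<and>
     (\<forall>f\<in>A. \<forall>c::complex. (\<lambda>z. c * f z) \<in> A)
     \<comment> \<open>... on which N is a norm (functions identified on the disc) ...\<close>
   \<and> (\<forall>f\<in>A. 0 \<le> N f \<and> (N f = 0 \<longleftrightarrow> (\<forall>z\<in>disc R. f z = 0)))
   \<and> (\<forall>f\<in>A. \<forall>g\<in>A. N (\<lambda>z. f z + g z) \<le> N f + N g)
   \<and> (\<forall>f\<in>A. \<forall>c::complex. N (\<lambda>z. c * f z) = cmod c * N f)
     \<comment> \<open>... which is complete\<close>
   \<and> (\<forall>F. (\<forall>n. F n \<in> A) \<and> (\<forall>e>0. \<exists>M. \<forall>m\<ge>M. \<forall>n\<ge>M. N (\<lambda>z. F m z - F n z) < e)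
          \<longrightarrow> (\<exists>g\<in>A. (\<lambda>n. N (\<lambda>z. F n z - g z)) \<longlonglongrightarrow> 0))
     \<comment> \<open>norm convergence implies uniform convergence on compact subsets\<close>
   \<and> (\<forall>F f. (\<forall>n. F n \<in> A) \<and> f \<in> A \<and> (\<lambda>n. N (\<lambda>z. F n z - f z)) \<longlonglongrightarrow> 0
          \<longrightarrow> (\<forall>K. compact K \<and> K \<subseteq> disc R \<longrightarrow> uniform_limit K F f sequentially))
     \<comment> \<open>point evaluations bounded uniformly on compact subsets\<close>
   \<and> (\<forall>K. compact K \<and> K \<subseteq> disc R \<longrightarrow>
          (\<exists>C. \<forall>z\<in>K. \<forall>f\<in>A. cmod (f z) \<le> C * N f))"
proof -
  interpret Apset p R \<nu>
    using p(1) R w R' by unfold_locales auto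
  have c1: "(\<lambda>z. 0) \<in> A" using A_zero by (simp add: A_def)
  have c2: "\<forall>f\<in>A. \<forall>g\<in>A. (\<lambda>z. f z + g z) \<in> A" using A_add by (simp add: A_def)
  have c3: "\<forall>f\<in>A. \<forall>c::complex. (\<lambda>z. c * f z) \<in> A" using A_scale by (simp add: A_def)
  have c4: "\<forall>f\<in>A. 0 \<le> N f \<and> (N f = 0 \<longleftrightarrow> (\<forall>z\<in>disc R. f z = 0))"
    using N_zero by (simp add: A_def N_def)
  have c5: "\<forall>f\<in>A. \<forall>g\<in>A. N (\<lambda>z. f z + g z) \<le> N f + N g" using N_tri by (simp add: A_def N_def)
  have c6: "\<forall>f\<in>A. \<forall>c::complex. N (\<lambda>z. c * f z) = cmod c * N f" using N_hom by (simp add: A_def N_def)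
  have c7: "\<forall>F. (\<forall>n. F n \<in> A) \<and> (\<forall>e>0. \<exists>M. \<forall>m\<ge>M. \<forall>n\<ge>M. N (\<lambda>z. F m z - F n z) < e)
          \<longrightarrow> (\<exists>g\<in>A. (\<lambda>n. N (\<lambda>z. F n z - g z)) \<longlonglongrightarrow> 0)"
    using complete_A by (simp add: A_def N_def)
  have c8: "\<forall>F f. (\<forall>n. F n \<in> A) \<and> f \<in> A \<and> (\<lambda>n. N (\<lambda>z. F n z - f z)) \<longlonglongrightarrow> 0
          \<longrightarrow> (\<forall>K. compact K \<and> K \<subseteq> disc R \<longrightarrow> uniform_limit K F f sequentially)"
    using uniform_conv by (simp add: A_def N_def)
  have c9: "\<forall>K. compact K \<and> K \<subseteq> disc R \<longrightarrow>
          (\<exists>C. \<forall>z\<in>K. \<forall>f\<in>A. cmod (f z) \<le> C * N f)"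
    using eval_bound_A unfolding A_def N_def by blast
  show ?thesis using c1 c2 c3 c4 c5 c6 c7 c8 c9 by blast
qed

end
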